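(* Let $x_k\in\mathbb{R}^n_{\ge0}$ satisfy $Ax_k\le(1+\epsilon)\mathbf 1$, let $t\in\{0,\dots,w-1\}$, and let $B_t=\{i:\xi^{(t)}_k[i]\ne 0\}$. Then for every $\tau\in[0,1]$ and $x=\tau x_k+(1-\tau)x^{(t)}_{k+1}$, and every $i\in B_t$, the value $\nabla_i f_\mu(x)$ lies between $\frac12\nabla_i f_\mu(x_k)$ and $\frac32\nabla_i f_\mu(x_k)$ (in particular it has the same sign as $\nabla_i f_\mu(x_k)$).
   Context: Standing setup: $A\in\mathbb{R}^{m\times n}_{\ge 0}$, $\epsilon\in(0,1/2]$, $\log$ is the natural logarithm unless written $\log_2$. $\mu=\frac{\epsilon}{4\log(nm/\epsilon)}$, $p_j(x)=\exp\big(\frac{1}{\mu}((Ax)_j-1)\big)$, $f_\mu(x)=-\mathbf 1^Tx+\mu\sum_{j=1}^m p_j(x)$, with gradient $\nabla_i f_\mu(x)=-1+\sum_j A_{ji}p_j(x)\ge -1$. Set $\alpha=\mu/20$ and $w=\lceil\log_2(1/\epsilon)\rceil$. Given $x_k\ge 0$, write $g_i=\nabla_i f_\mu(x_k)$ and define $\xi_k[i]=0$ if $|g_i|\le\epsilon$, $\xi_k[i]=g_i$ if $\epsilon<|g_i|\le1$, $\xi_k[i]=1$ if $g_i>1$; for $t\in\{0,\dots,w-1\}$, $\xi^{(t)}_k[i]=\xi_k[i]$ if $\epsilon2^t<|\xi_k[i]|\le\epsilon2^{t+1}$ and $0$ otherwise; and $x^{(t)}_{k+1}[i]=x_k[i]\exp(-\alpha\xi^{(t)}_k[i])$.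 *)

theory Defs
  imports "HOL-Analysis.Analysis"
begin

text \<open>Matrix A :: real^'n^'m (m rows, n columns); vectors x :: real^'n.
  n = CARD('n), m = CARD('m).\<close>

definition mu_param :: "real \<Rightarrow> nat \<Rightarrow> nat \<Rightarrow> real" where
  "mu_param eps n m = eps / (4 * ln (real (n * m) / eps))"

definition pj :: "real \<Rightarrow> real^'n^'m \<Rightarrow> real^'n \<Rightarrow> 'm \<Rightarrow> real" where
  "pj mu A x j = exp ((1 / mu) * ((A *v x) $ j - 1))"

definition f_mu :: "real \<Rightarrow> real^'n^'m \<Rightarrow> real^'n \<Rightarrow> real" where
  "f_mu mu A x = - (\<Sum>i\<in>UNIV. x $ i) + mu * (\<Sum>j\<in>UNIV. pj mu A x j)"

definition grad_f :: "real \<Rightarrow> real^'n^'m \<Rightarrow> real^'n \<Rightarrow> 'n \<Rightarrow> real" where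
  "grad_f mu A x i = -1 + (\<Sum>j\<in>UNIV. A $ j $ i * pj mu A x j)"

text \<open>Truncated gradient coordinate; gradient is always \<ge> -1 so cases are exhaustive.\<close>
definition xi_trunc :: "real \<Rightarrow> real \<Rightarrow> real" where
  "xi_trunc eps g = (if \<bar>g\<bar> \<le> eps then 0 else if \<bar>g\<bar> \<le> 1 then g else if g > 1 then 1 else g)"

definition xi_bucket :: "real \<Rightarrow> nat \<Rightarrow> real \<Rightarrow> real" where
  "xi_bucket eps t v = (if eps * 2 ^ t < \<bar>v\<bar> \<and> \<bar>v\<bar> \<le> eps * 2 ^ (t + 1) then v else 0)"

definition w_param :: "real \<Rightarrow> nat" where
  "w_param eps = nat \<lceil>log 2 (1 / eps)\<rceil>"

end

theory Submission
  imports Defs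
begin

lemma alg_lemma:
  fixes K s g y :: real
  assumes K0: "0 \<le> K" and Ks: "K \<le> (77/500) * s" and s0: "0 < s" and sg: "s \<le> \<bar>g\<bar>" and s1: "s \<le> 1"
    and g1: "-1 \<le> g" and lo: "(g+1)*exp(-K) \<le> y+1" and hi: "y+1 \<le> (g+1)*exp K"
  shows "min (g/2) (3*g/2) \<le> y \<and> y \<le> max (g/2) (3*g/2)"
proof -
  have e1: "1 - K \<le> exp (-K)" using exp_ge_add_one_self[of "-K"] by simp
  have "(77/500) * s \<le> (77/500) * (1::real)" using s1 by simp
  hence K1: "K \<le> (77/500)" using Ks by linarith
  have e2: "exp K \<le> 1 + K + K^2" using exp_bound[of K] K0 K1 by simp
  have "K*K \<le> K * (77/500)" using mult_left_mono[OF K1 K0] .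
  hence "K^2 \<le> (77/500) * K" by (simp add: power2_eq_square)
  hence e3: "exp K \<le> 1 + (577/500) * K" using e2 by simp
  have gp: "0 \<le> g + 1" using g1 by simp
  have L: "(g+1)*(1-K) \<le> y+1" using mult_left_mono[OF e1 gp] lo by linarith
  have U: "y+1 \<le> (g+1)*(1+(577/500)*K)" using mult_left_mono[OF e3 gp] hi by linarith
  have Kg: "K * \<bar>g\<bar> \<le> (77/500) * \<bar>g\<bar>" using mult_right_mono[OF K1, of "\<bar>g\<bar>"] by simp
  have Kg2: "K \<le> (77/500) * \<bar>g\<bar>" using Ks sg by linarith
  have L': "g - K - K*g \<le> y" using L by (simp add: algebra_simps)
  have U': "y \<le> g + (577/500)*K + (577/500)*(K*g)" using U by (simp add: algebra_simps add_divide_distrib)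
  show ?thesis
  proof (cases "g > 0")
    case True
    hence "K*g \<le> (77/500)*g" "K \<le> (77/500)*g" using Kg Kg2 by auto
    moreover have "min (g/2) (3*g/2) = g/2" "max (g/2) (3*g/2) = 3*g/2" using True by auto
    ultimately show ?thesis using L' U' True by linarith
  next
    case False
    hence gn: "g < 0" using s0 sg by auto
    have "K*(g+1) \<le> (77/500) * (-g)" using Kg2 gn g1
      by (smt (verit, best) K0 mult_left_le)
    moreover have "min (g/2) (3*g/2) = 3*g/2" "max (g/2) (3*g/2) = g/2" using gn by auto
    ultimately show ?thesis using L' U' gn K0 by (simp add: algebra_simps)
  qed
qed

lemma exp_abs_lemma: "\<bar>exp (y::real) - 1\<bar> \<le> exp \<bar>y\<bar> - 1"
proof (cases "y \<ge> 0")
  case True then show ?thesis by simp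
next
  case False
  have a: "1 + y \<le> exp y" by simp
  have b: "1 - y \<le> exp (-y)" using exp_ge_add_one_self[of "-y"] by simp
  have c: "exp y \<le> 1" using False by simp
  have "\<bar>exp y - 1\<bar> = 1 - exp y" using c by simp
  also have "\<dots> \<le> exp (-y) - 1" using a b by linarith
  finally show ?thesis using False by simp
qed

theorem lemma3p3:
  fixes A :: "real^'n^'m" and xk :: "real^'n" and eps :: real and t :: nat
  defines "mu \<equiv> mu_param eps CARD('n) CARD('m)"
  defines "alpha \<equiv> mu / 20"
  defines "xi \<equiv> (\<lambda>i. xi_bucket eps t (xi_trunc eps (grad_f mu A xk i)))"
  defines "xnext \<equiv> (\<chi> i. xk $ i * exp (- alpha * xi i))"
  defines "B \<equiv> {i. xi i \<noteq> 0}"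
  assumes A_nonneg: "\<forall>j i. A $ j $ i \<ge> 0"
    and eps_pos: "0 < eps" and eps_le: "eps \<le> 1 / 2"
    and xk_nonneg: "\<forall>i. xk $ i \<ge> 0"
    and feas: "\<forall>j. (A *v xk) $ j \<le> 1 + eps"
    and t_lt: "t < w_param eps"
  shows "\<forall>\<tau>\<in>{0..1::real}. \<forall>i\<in>B.
     let x = \<tau> *\<^sub>R xk + (1 - \<tau>) *\<^sub>R xnext;
         g = grad_f mu A xk i
     in min (g / 2) (3 * g / 2) \<le> grad_f mu A x i \<and> grad_f mu A x i \<le> max (g / 2) (3 * g / 2)"
proof (intro ballI)
  fix \<tau> i assume tau: "\<tau> \<in> {0..1::real}" and iB: "i \<in> B"
  define x where "x = \<tau> *\<^sub>R xk + (1 - \<tau>) *\<^sub>R xnext"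
  define g where "g = grad_f mu A xk i"
  define r where "r = real (CARD('n) * CARD('m)) / eps"
  have nm: "1 \<le> real (CARD('n) * CARD('m))"
    by (metis One_nat_def Suc_leI card_gt_0_iff finite_class.finite_UNIV UNIV_not_empty nat_0_less_mult_iff of_nat_1 of_nat_le_iff)
  have r2: "2 \<le> r" unfolding r_def using nm eps_pos eps_le by (simp add: field_simps)
  have "exp (1/2::real) \<le> r" using exp_half_le2 r2 by linarith
  hence lnr: "1/2 \<le> ln r" using ln_ge_iff[of r "1/2"] r2 by simp
  have mu_eq: "mu = eps / (4 * ln r)" unfolding mu_def mu_param_def r_def by simp
  have mu_pos: "0 < mu" using mu_eq lnr eps_pos by simp
  have "mu \<le> eps / 2" unfolding mu_eq using lnr eps_pos by (intro divide_left_mono) auto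
  hence mu_le: "mu \<le> 1/4" using eps_le by simp
  have alpha_nn: "0 \<le> alpha" using mu_pos alpha_def by simp
  have pj_pos: "\<And>y j. 0 < pj mu A y j" by (simp add: pj_def)
  have grad_ge: "\<And>y l. -1 \<le> grad_f mu A y l"
    unfolding grad_f_def using A_nonneg pj_pos by (simp add: sum_nonneg less_imp_le)
  define D where "D = eps * 2 ^ (t + 1)"
  have xi_cases: "\<And>l. xi l = 0 \<or> (eps * 2 ^ t < \<bar>xi l\<bar> \<and> \<bar>xi l\<bar> \<le> D)"
    by (simp add: xi_def xi_bucket_def D_def)
  define s where "s = \<bar>xi i\<bar>"
  have xin: "xi i \<noteq> 0" using iB B_def by simp
  hence s_lo: "eps * 2 ^ t < s" and s_D: "s \<le> D" using xi_cases[of i] s_def by auto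
  have D2s: "D < 2 * s" using s_lo by (simp add: D_def)
  have s_pos: "0 < s" using xin s_def by simp
  have tr: "\<bar>xi_trunc eps g\<bar> \<le> \<bar>g\<bar> \<and> \<bar>xi_trunc eps g\<bar> \<le> 1"
    using grad_ge[of xk i] unfolding g_def[symmetric] xi_trunc_def by auto
  have xieq: "xi i = xi_bucket eps t (xi_trunc eps g)" by (simp add: xi_def g_def)
  have "\<bar>xi i\<bar> \<le> \<bar>xi_trunc eps g\<bar>" unfolding xieq xi_bucket_def by auto
  hence s_g: "s \<le> \<bar>g\<bar>" and s_1: "s \<le> 1" using tr s_def by auto
  define \<delta> where "\<delta> = alpha * D"
  have D_nn: "0 \<le> D" using D2s s_D s_pos by linarith
  have d_nn: "0 \<le> \<delta>" using alpha_nn D_nn \<delta>_def by simp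
  have axi: "\<bar>alpha * xi l\<bar> \<le> \<delta>" for l
  proof -
    have "\<bar>xi l\<bar> \<le> D" using xi_cases[of l] D_nn by auto
    thus ?thesis using alpha_nn \<delta>_def by (simp add: abs_mult mult_left_mono)
  qed
  define c where "c = (\<lambda>l. \<tau> + (1 - \<tau>) * exp (- alpha * xi l))"
  have xc: "x $ l = xk $ l * c l" for l
    by (simp add: x_def xnext_def c_def algebra_simps)
  have c1: "\<bar>c l - 1\<bar> \<le> exp \<delta> - 1" for l
  proof -
    have "\<bar>c l - 1\<bar> = (1 - \<tau>) * \<bar>exp (- alpha * xi l) - 1\<bar>"
    proof -
      have "c l - 1 = (1 - \<tau>) * (exp (- alpha * xi l) - 1)" by (simp add: c_def algebra_simps)
      thus ?thesis using tau by (simp add: abs_mult)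
    qed
    also have "\<dots> \<le> \<bar>exp (- alpha * xi l) - 1\<bar>" using tau by (simp add: mult_left_le_one_le)
    also have "\<dots> \<le> exp \<bar>- alpha * xi l\<bar> - 1" by (rule exp_abs_lemma)
    also have "\<dots> \<le> exp \<delta> - 1" using axi[of l] by simp
    finally show ?thesis .
  qed
  define \<Delta> where "\<Delta> = (\<lambda>j. (A *v x) $ j - (A *v xk) $ j)"
  have Deq: "\<Delta> j = (\<Sum>l\<in>UNIV. A $ j $ l * xk $ l * (c l - 1))" for j
    by (simp add: \<Delta>_def matrix_vector_mult_def xc sum_subtractf[symmetric] algebra_simps)
  have Axk_nn: "0 \<le> (A *v xk) $ j" for j
    using A_nonneg xk_nonneg by (simp add: matrix_vector_mult_def sum_nonneg)
  have Dbound: "\<bar>\<Delta> j\<bar> \<le> (exp \<delta> - 1) * (3/2)" for j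
  proof -
    have "\<bar>\<Delta> j\<bar> \<le> (\<Sum>l\<in>UNIV. \<bar>A $ j $ l * xk $ l * (c l - 1)\<bar>)" unfolding Deq by (rule sum_abs)
    also have "\<dots> \<le> (\<Sum>l\<in>UNIV. A $ j $ l * xk $ l * (exp \<delta> - 1))"
    proof (rule sum_mono)
      fix l
      have "0 \<le> A $ j $ l * xk $ l" using A_nonneg xk_nonneg by simp
      thus "\<bar>A $ j $ l * xk $ l * (c l - 1)\<bar> \<le> A $ j $ l * xk $ l * (exp \<delta> - 1)"
      proof -
        have "\<bar>A $ j $ l * xk $ l * (c l - 1)\<bar> = A $ j $ l * xk $ l * \<bar>c l - 1\<bar>"
          using \<open>0 \<le> A $ j $ l * xk $ l\<close> by (simp only: abs_mult[of "A $ j $ l * xk $ l"])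
        also have "\<dots> \<le> A $ j $ l * xk $ l * (exp \<delta> - 1)"
          using c1[of l] \<open>0 \<le> A $ j $ l * xk $ l\<close> by (rule mult_left_mono)
        finally show ?thesis .
      qed
    qed
    also have "\<dots> = (exp \<delta> - 1) * (A *v xk) $ j"
      by (simp add: matrix_vector_mult_def sum_distrib_left algebra_simps)
    also have "\<dots> \<le> (exp \<delta> - 1) * (3/2)"
      using feas[rule_format, of j] eps_le d_nn by (intro mult_left_mono) auto
    finally show ?thesis .
  qed
  define K where "K = (3/2) * (exp \<delta> - 1) / mu"
  have K_nn: "0 \<le> K" using d_nn mu_pos by (simp add: K_def)
  have DK: "\<bar>\<Delta> j / mu\<bar> \<le> K" for j
  proof -
    have "\<bar>\<Delta> j / mu\<bar> = \<bar>\<Delta> j\<bar> / mu" using mu_pos by simp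
    also have "\<dots> \<le> ((exp \<delta> - 1) * (3/2)) / mu" using Dbound[of j] mu_pos by (intro divide_right_mono) auto
    finally show ?thesis by (simp add: K_def mult.commute)
  qed
  have pjx: "pj mu A x j = pj mu A xk j * exp (\<Delta> j / mu)" for j
    by (simp add: pj_def \<Delta>_def flip: exp_add) (simp add: diff_divide_distrib add_divide_distrib)
  have gx: "grad_f mu A x i + 1 = (\<Sum>j\<in>UNIV. A $ j $ i * pj mu A xk j * exp (\<Delta> j / mu))"
    by (simp add: grad_f_def pjx mult.assoc)
  have g1: "g + 1 = (\<Sum>j\<in>UNIV. A $ j $ i * pj mu A xk j)" by (simp add: g_def grad_f_def)
  have lo: "(g+1) * exp (-K) \<le> grad_f mu A x i + 1"
    unfolding gx g1 sum_distrib_right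
  proof (rule sum_mono)
    fix j
    have "-K \<le> \<Delta> j / mu" using DK[of j] by linarith
    hence "exp (-K) \<le> exp (\<Delta> j / mu)" by simp
    moreover have "0 \<le> A $ j $ i * pj mu A xk j" using A_nonneg pj_pos[of xk j] by simp
    ultimately show "A $ j $ i * pj mu A xk j * exp (- K) \<le> A $ j $ i * pj mu A xk j * exp (\<Delta> j / mu)"
      by (rule mult_left_mono)
  qed
  have hi: "grad_f mu A x i + 1 \<le> (g+1) * exp K"
    unfolding gx g1 sum_distrib_right
  proof (rule sum_mono)
    fix j
    have "\<Delta> j / mu \<le> K" using DK[of j] by linarith
    hence "exp (\<Delta> j / mu) \<le> exp K" by simp
    moreover have "0 \<le> A $ j $ i * pj mu A xk j" using A_nonneg pj_pos[of xk j] by simp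
    ultimately show "A $ j $ i * pj mu A xk j * exp (\<Delta> j / mu) \<le> A $ j $ i * pj mu A xk j * exp K"
      by (rule mult_left_mono)
  qed
  have d_le: "\<delta> \<le> mu / 10"
  proof -
    have "D \<le> 2" using D2s s_1 by linarith
    thus ?thesis using alpha_nn mu_pos by (simp add: \<delta>_def alpha_def)
  qed
  have d_le2: "\<delta> \<le> 1/40" using d_le mu_le by linarith
  have "exp \<delta> \<le> 1 + \<delta> + \<delta>^2" using exp_bound[of \<delta>] d_nn d_le2 by simp
  moreover have "\<delta>^2 \<le> \<delta> * (1/40)" using mult_left_mono[OF d_le2 d_nn] by (simp add: power2_eq_square)
  ultimately have ed: "exp \<delta> - 1 \<le> (41/40) * \<delta>" by linarith
  have "K \<le> (3/2) * ((41/40) * \<delta>) / mu" unfolding K_def using ed mu_pos by (intro divide_right_mono) auto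
  also have "\<dots> = (123/80) * (D / 20)" using mu_pos by (simp add: \<delta>_def alpha_def field_simps)
  also have "\<dots> \<le> (77/500) * s" using D2s s_pos by simp
  finally have Ks: "K \<le> (77/500) * s" .
  show "let x = \<tau> *\<^sub>R xk + (1 - \<tau>) *\<^sub>R xnext; g = grad_f mu A xk i
     in min (g / 2) (3 * g / 2) \<le> grad_f mu A x i \<and> grad_f mu A x i \<le> max (g / 2) (3 * g / 2)"
    unfolding Let_def x_def[symmetric] g_def[symmetric]
    by (rule alg_lemma[OF K_nn Ks s_pos s_g s_1 _ lo hi]) (use grad_ge[of xk i] g_def in simp)
qed

end
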